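(* Let $r\ge3$, $n>r$, and $1<i<r$. In $T$ define $\zeta(T_{s_j})=(vF_jE_j-1)1_\omega$ for $1\le j<r$ and $\zeta(T_\rho)=(E_rE_{r+1}\cdots E_{n-1})(E_{r-1}E_{r-2}\cdots E_1)E_n1_\omega$. Then $\zeta(T_{s_{i-1}})\zeta(T_\rho)=\zeta(T_\rho)\zeta(T_{s_i})$.
   Context: $T$ is the $\mathbb{Q}(v)$-algebra with generators $E_i,F_i,K_i^{\pm1}$ ($1\le i\le n$, indices mod $n$) and relations: $K_iK_j=K_jK_i$; $K_iK_i^{-1}=K_i^{-1}K_i=1$; $K_iE_j=v^{\epsilon^+(i,j)}E_jK_i$; $K_iF_j=v^{-\epsilon^+(i,j)}F_jK_i$ ($\epsilon^+(i,j)=1$ if $j=i$, $-1$ if $j\equiv i-1\pmod n$, $0$ otherwise); $E_iF_j-F_jE_i=\delta_{ij}\frac{K_iK_{i+1}^{-1}-K_i^{-1}K_{i+1}}{v-v^{-1}}$; $E_iE_j=E_jE_i$, $F_iF_j=F_jF_i$ if $i-j\not\equiv\pm1$; $E_i^2E_j-(v+v^{-1})E_iE_jE_i+E_jE_i^2=0$, $F_i^2F_j-(v+v^{-1})F_iF_jF_i+F_jF_i^2=0$ if $i-j\equiv\pm1\pmod n$; $K_1\cdots K_n=v^r$; $\prod_{j=0}^r(K_i-v^j)=0$. For a composition $\lambda$ of $r$ into $n$ nonnegative parts, $1_\lambda=\prod_{i=1}^n\prod_{s=1}^{\lambda_i}\frac{K_iv^{-s+1}-K_i^{-1}v^{s-1}}{v^s-v^{-s}}$;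 $\omega=(1,\dots,1,0,\dots,0)$ with $r$ ones and $n-r$ zeros. *)

theory Defs
  imports "HOL-Computational_Algebra.Polynomial" "HOL-Computational_Algebra.Fraction_Field"
begin

type_synonym qv = "rat poly fract"

definition vv :: qv where "vv = Fract [:0, 1:] 1"

definition qv_algebra :: "(qv \<Rightarrow> 'a::ring_1) \<Rightarrow> bool" where
  "qv_algebra sc \<longleftrightarrow> sc 1 = 1 \<and> (\<forall>a b. sc (a + b) = sc a + sc b)
     \<and> (\<forall>a b. sc (a * b) = sc a * sc b) \<and> (\<forall>a x. sc a * x = x * sc a)"

definition nxt :: "nat \<Rightarrow> nat \<Rightarrow> nat" where "nxt n i = (if i = n then 1 else i + 1)"
definition prv :: "nat \<Rightarrow> nat \<Rightarrow> nat" where "prv n i = (if i = 1 then n else i - 1)"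

definition epsp :: "nat \<Rightarrow> nat \<Rightarrow> nat \<Rightarrow> int" where
  "epsp n i j = (if j = i then 1 else if j = prv n i then -1 else 0)"

text \<open>The defining relations of T (with K i^{-1} written Ki i), for indices in {1..n}.\<close>
definition T_relations ::
  "(qv \<Rightarrow> 'a::ring_1) \<Rightarrow> nat \<Rightarrow> nat \<Rightarrow> (nat \<Rightarrow> 'a) \<Rightarrow> (nat \<Rightarrow> 'a) \<Rightarrow> (nat \<Rightarrow> 'a) \<Rightarrow> (nat \<Rightarrow> 'a) \<Rightarrow> bool"
  where
  "T_relations sc n r E F K Ki \<longleftrightarrow>
     (\<forall>i\<in>{1..n}. \<forall>j\<in>{1..n}. K i * K j = K j * K i) \<and>
     (\<forall>i\<in>{1..n}. K i * Ki i = 1 \<and> Ki i * K i = 1) \<and>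
     (\<forall>i\<in>{1..n}. \<forall>j\<in>{1..n}. K i * E j = sc (vv powi epsp n i j) * E j * K i) \<and>
     (\<forall>i\<in>{1..n}. \<forall>j\<in>{1..n}. K i * F j = sc (vv powi (- epsp n i j)) * F j * K i) \<and>
     (\<forall>i\<in>{1..n}. \<forall>j\<in>{1..n}. E i * F j - F j * E i =
         (if i = j then sc (inverse (vv - inverse vv)) * (K i * Ki (nxt n i) - Ki i * K (nxt n i))
          else 0)) \<and>
     (\<forall>i\<in>{1..n}. \<forall>j\<in>{1..n}. j \<noteq> nxt n i \<and> j \<noteq> prv n i \<longrightarrow>
         E i * E j = E j * E i \<and> F i * F j = F j * F i) \<and>
     (\<forall>i\<in>{1..n}. \<forall>j\<in>{1..n}. j = nxt n i \<or> j = prv n i \<longrightarrow>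
         E i * E i * E j - sc (vv + inverse vv) * E i * E j * E i + E j * E i * E i = 0 \<and>
         F i * F i * F j - sc (vv + inverse vv) * F i * F j * F i + F j * F i * F i = 0) \<and>
     prod_list (map K [1..<n+1]) = sc (vv ^ r) \<and>
     (\<forall>i\<in>{1..n}. prod_list (map (\<lambda>j. K i - sc (vv ^ j)) [0..<r+1]) = 0)"

text \<open>The idempotent 1_lambda for a composition lambda (given as a function on {1..n}).\<close>
definition one_lam ::
  "(qv \<Rightarrow> 'a::ring_1) \<Rightarrow> nat \<Rightarrow> (nat \<Rightarrow> 'a) \<Rightarrow> (nat \<Rightarrow> 'a) \<Rightarrow> (nat \<Rightarrow> nat) \<Rightarrow> 'a" where
  "one_lam sc n K Ki lam = prod_list (map (\<lambda>i. prod_list (map (\<lambda>s.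
       (K i * sc (vv powi (1 - int s)) - Ki i * sc (vv powi (int s - 1)))
         * sc (inverse (vv ^ s - inverse (vv ^ s)))) [1..<lam i + 1])) [1..<n+1])"

definition omega :: "nat \<Rightarrow> nat \<Rightarrow> nat" where "omega r i = (if i \<le> r then 1 else 0)"

definition zeta_s :: "(qv \<Rightarrow> 'a::ring_1) \<Rightarrow> nat \<Rightarrow> nat \<Rightarrow> (nat \<Rightarrow> 'a) \<Rightarrow> (nat \<Rightarrow> 'a) \<Rightarrow> (nat \<Rightarrow> 'a) \<Rightarrow> (nat \<Rightarrow> 'a) \<Rightarrow> nat \<Rightarrow> 'a" where
  "zeta_s sc n r E F K Ki j = (sc vv * F j * E j - 1) * one_lam sc n K Ki (omega r)"

definition zeta_rho :: "(qv \<Rightarrow> 'a::ring_1) \<Rightarrow> nat \<Rightarrow> nat \<Rightarrow> (nat \<Rightarrow> 'a) \<Rightarrow> (nat \<Rightarrow> 'a) \<Rightarrow> (nat \<Rightarrow> 'a) \<Rightarrow> 'a" where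
  "zeta_rho sc n r E K Ki = prod_list (map E [r..<n]) * prod_list (map E (rev [1..<r])) * E n
      * one_lam sc n K Ki (omega r)"

end

theory Submission
  imports Defs
begin

lemma vv_pow0: "vv ^ k = Fract ([:0,1:] ^ k) 1"
  by (induct k) (simp_all add: vv_def One_fract_def)
lemma vv_pow: "vv ^ k = Fract (monom 1 k) 1"
  by (simp add: vv_pow0 monom_altdef)
lemma vv_nz: "vv \<noteq> 0"
  by (simp add: vv_def Zero_fract_def eq_fract)
lemma vv_pow_eq1: "vv ^ k = 1 \<Longrightarrow> k = 0"
  by (simp add: vv_pow One_fract_def eq_fract monom_eq_1_iff)
lemma vv_powi_inj: assumes "vv powi a = vv powi b" shows "a = b"
proof (rule ccontr)
  assume ne: "a \<noteq> b"
  { fix a b :: int assume ab: "a < b" and e: "vv powi a = vv powi b"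
    have "vv powi (b - a) = vv powi b / vv powi a" by (simp add: power_int_diff vv_nz)
    also have "\<dots> = 1" using e vv_nz by (simp add: power_int_eq_0_iff)
    finally have "vv ^ nat (b - a) = 1" by (metis ab less_imp_le diff_ge_0_iff_ge nat_0_le power_int_of_nat)
    then have "nat (b - a) = 0" by (rule vv_pow_eq1)
    with ab have False by simp }
  then show False using ne assms by (metis linorder_neqE)
qed
lemma vv_d: "vv - inverse vv \<noteq> 0"
proof
  assume "vv - inverse vv = 0"
  then have "vv * vv = 1" using vv_nz by (simp add: field_simps)
  then have "vv ^ 2 = 1" by (simp add: power2_eq_square)
  then show False using vv_pow_eq1[of 2] by simp
qed
lemma vv_s: "vv + inverse vv \<noteq> 0"
proof
  assume "vv + inverse vv = 0"
  then have "vv * vv = -1" using vv_nz by (simp add: field_simps)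
  then have "vv ^ 2 = -1" by (simp add: power2_eq_square)
  then have "Fract (monom (1::rat) 2) 1 = - Fract 1 1" by (simp add: vv_pow One_fract_def)
  then have "monom (1::rat) 2 = -1" by (simp add: eq_fract)
  then have "coeff (monom (1::rat) 2) 2 = coeff (-1) 2" by simp
  then show False by simp
qed


lemma cm_mult: "C*X = X*C \<Longrightarrow> C*Y = Y*C \<Longrightarrow> C*(X*Y) = (X*Y)*(C::'a::ring_1)"
  by (metis mult.assoc)
lemma cm_diff: "C*X = X*C \<Longrightarrow> C*Y = Y*C \<Longrightarrow> C*(X-Y) = (X-Y)*(C::'a::ring_1)"
  by (simp add: algebra_simps)
lemma cm_add: "C*X = X*C \<Longrightarrow> C*Y = Y*C \<Longrightarrow> C*(X+Y) = (X+Y)*(C::'a::ring_1)"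
  by (simp add: algebra_simps)
lemma cm_1: "C*1 = 1*(C::'a::ring_1)" by simp
lemma cm_sum: "(\<And>k. k \<in> S \<Longrightarrow> C * f k = f k * C) \<Longrightarrow> C * sum f S = sum f S * (C::'a::ring_1)"
  by (simp add: sum_distrib_left sum_distrib_right)
lemma cm_prod: "(\<And>x. x \<in> set xs \<Longrightarrow> C * x = x * C) \<Longrightarrow> C * prod_list xs = prod_list xs * (C::'a::ring_1)"
  by (induct xs) (simp_all, metis cm_mult)

locale qa =
  fixes sc :: "qv \<Rightarrow> 'a::ring_1"
  assumes qa: "qv_algebra sc"
begin
lemma sc1[simp]: "sc 1 = 1" using qa unfolding qv_algebra_def by blast
lemma sc_add[simp]: "sc (a + b) = sc a + sc b" using qa unfolding qv_algebra_def by blast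
lemma sc_mult[simp]: "sc (a * b) = sc a * sc b" using qa unfolding qv_algebra_def by blast
lemma sc_comm: "sc a * x = x * sc a" using qa unfolding qv_algebra_def by blast
lemma sc_cm: "C * sc a = sc a * C" by (rule sc_comm[symmetric])
lemma sc0[simp]: "sc 0 = 0"
  using sc_add[of 0 0] by simp
lemma sc_uminus[simp]: "sc (- a) = - sc a"
  using sc_add[of a "-a"] by (metis add.inverse_unique add.right_inverse sc0)
lemma sc_diff[simp]: "sc (a - b) = sc a - sc b"
  using sc_add[of a "-b"] by simp
lemma sc_left: "x * (sc a * y) = sc a * (x * y)"
proof -
  have "x * sc a = sc a * x" by (rule sc_cm)
  then show ?thesis by (metis mult.assoc)
qed
lemma sc_inv: assumes "c \<noteq> 0" shows "sc (inverse c) * (sc c * x) = x"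
proof -
  have "sc (inverse c) * (sc c * x) = sc (inverse c * c) * x" by (simp add: mult.assoc)
  also have "\<dots> = x" using assms by simp
  finally show ?thesis .
qed
lemma sc_cancel: "c \<noteq> 0 \<Longrightarrow> sc c * x = 0 \<Longrightarrow> x = 0"
  by (drule sc_inv[of c x]) simp

lemma comm_prodA:
  assumes "C * A = A * C"
  shows "C * prod_list (map (\<lambda>k. A - sc (f k)) ks) = prod_list (map (\<lambda>k. A - sc (f k)) ks) * C"
  by (rule cm_prod) (auto intro!: cm_diff assms sc_cm)

lemma decomp:
  assumes "distinct ks"
  shows "\<exists>R. (\<forall>x. prod_list (map (\<lambda>k. A - sc (vv powi k)) ks) * x = 0 \<longrightarrow>
              x = (\<Sum>k\<in>set ks. R k * x) \<and> (\<forall>k\<in>set ks. A * (R k * x) = sc (vv powi k) * (R k * x)))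
          \<and> (\<forall>C k. C * A = A * C \<longrightarrow> C * R k = R k * C)"
  using assms
proof (induct ks)
  case Nil
  show ?case by (rule exI[of _ "\<lambda>_. 0"]) simp
next
  case (Cons k0 ks)
  then obtain R' where R'0: "\<forall>x. prod_list (map (\<lambda>k. A - sc (vv powi k)) ks) * x = 0 \<longrightarrow>
              x = (\<Sum>k\<in>set ks. R' k * x) \<and> (\<forall>k\<in>set ks. A * (R' k * x) = sc (vv powi k) * (R' k * x))"
    and R'3: "\<forall>C k. C * A = A * C \<longrightarrow> C * R' k = R' k * C" by auto
  have R'1: "\<And>x. prod_list (map (\<lambda>k. A - sc (vv powi k)) ks) * x = 0 \<Longrightarrow>
              x = (\<Sum>k\<in>set ks. R' k * x) \<and> (\<forall>k\<in>set ks. A * (R' k * x) = sc (vv powi k) * (R' k * x))"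
    using R'0 by blast
  have R'2: "\<And>C k. C * A = A * C \<Longrightarrow> C * R' k = R' k * C" using R'3 by blast
  have k0: "k0 \<notin> set ks" using Cons by simp
  define c where "c k = inverse (vv powi k - vv powi k0)" for k
  define S where "S k = sc (c k) * R' k * (A - sc (vv powi k0))" for k
  define R where "R k = (if k = k0 then 1 - (\<Sum>k'\<in>set ks. S k') else S k)" for k
  have ck: "k \<in> set ks \<Longrightarrow> c k * (vv powi k - vv powi k0) = 1" for k
  proof -
    assume kk: "k \<in> set ks"
    have "vv powi k \<noteq> vv powi k0" using k0 kk vv_powi_inj by blast
    then show ?thesis unfolding c_def by simp
  qed
  show ?case
  proof (rule exI[of _ R], intro conjI allI impI)
    fix C k assume C: "C * A = A * C"
    have CS: "C * S k = S k * C" for k unfolding S_def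
      by (intro cm_mult cm_diff C R'2 sc_cm)
    show "C * R k = R k * C" unfolding R_def
      by (auto intro!: cm_diff cm_sum CS)
  next
    fix x assume x: "prod_list (map (\<lambda>k. A - sc (vv powi k)) (k0 # ks)) * x = 0"
    define y where "y = (A - sc (vv powi k0)) * x"
    have "prod_list (map (\<lambda>k. A - sc (vv powi k)) ks) * y
        = (A - sc (vv powi k0)) * prod_list (map (\<lambda>k. A - sc (vv powi k)) ks) * x"
      unfolding y_def using comm_prodA[of "A - sc (vv powi k0)" A "\<lambda>k. vv powi k" ks]
      by (simp add: mult.assoc[symmetric] cm_diff sc_cm)
    also have "\<dots> = 0" using x by (simp add: mult.assoc)
    finally have "prod_list (map (\<lambda>k. A - sc (vv powi k)) ks) * y = 0" .
    from R'1[OF this] have y1: "y = (\<Sum>k\<in>set ks. R' k * y)"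
      and y2: "\<And>k. k \<in> set ks \<Longrightarrow> A * (R' k * y) = sc (vv powi k) * (R' k * y)" by auto
    have Sx: "S k * x = sc (c k) * (R' k * y)" for k
      unfolding S_def y_def by (simp add: mult.assoc)
    have sumx: "(\<Sum>k\<in>set ks. R k * x) = (\<Sum>k\<in>set ks. S k * x)"
      using k0 by (intro sum.cong) (auto simp: R_def)
    have "(\<Sum>k\<in>set (k0 # ks). R k * x) = R k0 * x + (\<Sum>k\<in>set ks. R k * x)"
      using k0 by simp
    then show "x = (\<Sum>k\<in>set (k0 # ks). R k * x)"
      using sumx by (simp add: R_def sum_distrib_right left_diff_distrib)
    have key: "(A - sc (vv powi k0)) * (S k' * x) = R' k' * y" if "k' \<in> set ks" for k'
    proof -
      have "(A - sc (vv powi k0)) * (S k' * x) = A * (sc (c k') * (R' k' * y)) - sc (vv powi k0) * (sc (c k') * (R' k' * y))"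
        by (simp add: Sx left_diff_distrib)
      also have "\<dots> = sc (c k') * (A * (R' k' * y)) - sc (c k') * (sc (vv powi k0) * (R' k' * y))"
        unfolding sc_left[of A] sc_left[of "sc (vv powi k0)" "c k'"] ..
      also have "\<dots> = sc (c k') * (sc (vv powi k' - vv powi k0) * (R' k' * y))"
        using y2[OF that] by (simp add: left_diff_distrib right_diff_distrib)
      also have "\<dots> = sc (c k' * (vv powi k' - vv powi k0)) * (R' k' * y)"
        by (simp only: sc_mult mult.assoc)
      finally show ?thesis using ck[OF that] by simp
    qed
    show "\<forall>k\<in>set (k0 # ks). A * (R k * x) = sc (vv powi k) * (R k * x)"
    proof
      fix k assume k: "k \<in> set (k0 # ks)"
      show "A * (R k * x) = sc (vv powi k) * (R k * x)"
      proof (cases "k = k0")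
        case True
        have "R k * x = x - (\<Sum>k'\<in>set ks. S k' * x)"
          using True by (simp add: R_def left_diff_distrib sum_distrib_right)
        then have "(A - sc (vv powi k0)) * (R k * x) = y - (\<Sum>k'\<in>set ks. (A - sc (vv powi k0)) * (S k' * x))"
          by (simp add: y_def right_diff_distrib sum_distrib_left)
        also have "\<dots> = y - (\<Sum>k'\<in>set ks. R' k' * y)"
          using key by simp
        finally have "(A - sc (vv powi k0)) * (R k * x) = 0" using y1 by simp
        then show ?thesis using True by (simp add: left_diff_distrib)
      next
        case False
        then have kk: "k \<in> set ks" using k by simp
        have "A * (R k * x) = A * (sc (c k) * (R' k * y))"
          using False by (simp add: R_def Sx)
        also have "\<dots> = sc (c k) * (A * (R' k * y))"
          by (rule sc_left)
        also have "\<dots> = sc (c k) * (sc (vv powi k) * (R' k * y))"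
          using y2[OF kk] by simp
        also have "\<dots> = sc (vv powi k) * (sc (c k) * (R' k * y))"
          by (metis mult.assoc sc_cm)
        also have "\<dots> = sc (vv powi k) * (R k * x)"
          using False by (simp add: R_def Sx)
        finally show ?thesis .
      qed
    qed
  qed
qed

lemma lemB:
  "\<forall>x s. (\<forall>p\<in>set L. \<forall>q\<in>set L. fst p * fst q = fst q * fst p) \<longrightarrow>
     (\<forall>p\<in>set L. \<exists>ks. distinct ks \<and> (\<forall>k\<in>set ks. snd p \<le> k) \<and>
          prod_list (map (\<lambda>k. fst p - sc (vv powi k)) ks) * x = 0) \<longrightarrow>
     prod_list (map fst L) * x = sc (vv powi s) * x \<longrightarrow> s \<le> sum_list (map snd L) \<longrightarrow>
     (s < sum_list (map snd L) \<longrightarrow> x = 0) \<and>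
     (s = sum_list (map snd L) \<longrightarrow> (\<forall>p\<in>set L. fst p * x = sc (vv powi snd p) * x))"
proof (induct L)
  case Nil
  show ?case
  proof (intro allI impI conjI)
    fix x :: 'a and s :: int
    assume h: "prod_list (map fst []) * x = sc (vv powi s) * x" and "s < sum_list (map snd ([]::('a\<times>int) list))"
    then have s0: "s < 0" by simp
    have "sc (1 - vv powi s) * x = 0" using h by (simp add: left_diff_distrib)
    moreover have "1 - vv powi s \<noteq> 0"
    proof
      assume "1 - vv powi s = 0"
      then have "vv powi 0 = vv powi s" by simp
      then show False using vv_powi_inj s0 by fastforce
    qed
    ultimately show "x = 0" using sc_cancel by blast
  qed simp
next
  case (Cons p L)
  obtain A c where p: "p = (A, c)" by (cases p)
  have main: "(s < sum_list (map snd (p # L)) \<longrightarrow> x = 0) \<and>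
          (s = sum_list (map snd (p # L)) \<longrightarrow> (\<forall>u\<in>set (p # L). fst u * x = sc (vv powi snd u) * x))"
    if cm: "\<forall>u\<in>set (p # L). \<forall>q\<in>set (p # L). fst u * fst q = fst q * fst u"
      and rel: "\<forall>u\<in>set (p # L). \<exists>ks. distinct ks \<and> (\<forall>k\<in>set ks. snd u \<le> k) \<and>
          prod_list (map (\<lambda>k. fst u - sc (vv powi k)) ks) * x = 0"
      and pr: "prod_list (map fst (p # L)) * x = sc (vv powi s) * x"
      and sle: "s \<le> sum_list (map snd (p # L))" for x s
  proof -
    define B where "B = prod_list (map fst L)"
    define S where "S = sum_list (map snd L)"
    have sle': "s \<le> c + S" using sle by (simp add: p S_def)
    have AB: "A * B = B * A" unfolding B_def
      using cm by (intro cm_prod) (auto simp: p)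
    obtain ks where ks: "distinct ks" "\<And>k. k \<in> set ks \<Longrightarrow> c \<le> k"
      "prod_list (map (\<lambda>k. A - sc (vv powi k)) ks) * x = 0" using rel by (auto simp: p)
    obtain R where R1: "\<And>x. prod_list (map (\<lambda>k. A - sc (vv powi k)) ks) * x = 0 \<Longrightarrow>
              x = (\<Sum>k\<in>set ks. R k * x) \<and> (\<forall>k\<in>set ks. A * (R k * x) = sc (vv powi k) * (R k * x))"
      and R2: "\<And>C k. C * A = A * C \<Longrightarrow> C * R k = R k * C"
      using decomp[OF ks(1), of A] by blast
    have xsum: "x = (\<Sum>k\<in>set ks. R k * x)" and xeig: "\<And>k. k \<in> set ks \<Longrightarrow> A * (R k * x) = sc (vv powi k) * (R k * x)"
      using R1[OF ks(3)] by blast+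
    have IH: "(\<forall>p\<in>set L. \<forall>q\<in>set L. fst p * fst q = fst q * fst p) \<Longrightarrow>
     (\<forall>p\<in>set L. \<exists>ks. distinct ks \<and> (\<forall>k\<in>set ks. snd p \<le> k) \<and>
          prod_list (map (\<lambda>k. fst p - sc (vv powi k)) ks) * y = 0) \<Longrightarrow>
     B * y = sc (vv powi t) * y \<Longrightarrow> t \<le> S \<Longrightarrow>
     (t < S \<longrightarrow> y = 0) \<and> (t = S \<longrightarrow> (\<forall>p\<in>set L. fst p * y = sc (vv powi snd p) * y))" for y t
      using Cons.hyps unfolding B_def S_def by blast
    have cmL: "\<forall>p\<in>set L. \<forall>q\<in>set L. fst p * fst q = fst q * fst p" using cm by auto
    have comp: "\<And>k. k \<in> set ks \<Longrightarrow> B * (R k * x) = sc (vv powi (s - k)) * (R k * x) \<and>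
       (\<forall>p\<in>set L. \<exists>ks. distinct ks \<and> (\<forall>k\<in>set ks. snd p \<le> k) \<and>
          prod_list (map (\<lambda>k. fst p - sc (vv powi k)) ks) * (R k * x) = 0)"
    proof
      fix k assume k: "k \<in> set ks"
      have ABx: "(A * B) * x = sc (vv powi s) * x" using pr by (simp add: p B_def)
      have "(A * B) * (R k * x) = R k * ((A * B) * x)"
        using R2[of "A * B" k] AB by (metis mult.assoc)
      also have "\<dots> = R k * (sc (vv powi s) * x)" by (simp only: ABx)
      also have "\<dots> = sc (vv powi s) * (R k * x)" by (rule sc_left)
      finally have e1: "(A * B) * (R k * x) = sc (vv powi s) * (R k * x)" .
      have "(A * B) * (R k * x) = B * (A * (R k * x))" using AB by (simp add: mult.assoc)
      also have "\<dots> = B * (sc (vv powi k) * (R k * x))" using xeig[OF k] by simp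
      also have "\<dots> = sc (vv powi k) * (B * (R k * x))" by (rule sc_left)
      finally have e2: "sc (vv powi k) * (B * (R k * x)) = sc (vv powi s) * (R k * x)" using e1 by simp
      have "B * (R k * x) = sc (inverse (vv powi k)) * (sc (vv powi k) * (B * (R k * x)))"
        by (rule sc_inv[symmetric]) (simp add: vv_nz)
      also have "\<dots> = sc (inverse (vv powi k) * vv powi s) * (R k * x)" using e2 by (simp add: mult.assoc)
      also have "inverse (vv powi k) * vv powi s = vv powi (s - k)"
        by (simp add: power_int_diff vv_nz field_simps)
      finally show "B * (R k * x) = sc (vv powi (s - k)) * (R k * x)" .
      show "\<forall>p\<in>set L. \<exists>ks. distinct ks \<and> (\<forall>k\<in>set ks. snd p \<le> k) \<and>
          prod_list (map (\<lambda>k. fst p - sc (vv powi k)) ks) * (R k * x) = 0"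
      proof
        fix q assume q: "q \<in> set L"
        then obtain ks' where ks': "distinct ks'" "\<forall>k\<in>set ks'. snd q \<le> k"
          "prod_list (map (\<lambda>k. fst q - sc (vv powi k)) ks') * x = 0" using rel by auto
        have qq: "q \<in> set (p # L)" "p \<in> set (p # L)" using q by auto
        have "fst q * fst p = fst p * fst q" using cm qq by blast
        then have qA: "fst q * A = A * fst q" by (simp add: p)
        have "prod_list (map (\<lambda>k. fst q - sc (vv powi k)) ks') * A = A * prod_list (map (\<lambda>k. fst q - sc (vv powi k)) ks')"
          using comm_prodA[of A "fst q" "\<lambda>k. vv powi k" ks'] qA by simp
        then have "prod_list (map (\<lambda>k. fst q - sc (vv powi k)) ks') * (R k * x) = R k * (prod_list (map (\<lambda>k. fst q - sc (vv powi k)) ks') * x)"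
          using R2 by (metis mult.assoc)
        then show "\<exists>ks. distinct ks \<and> (\<forall>k\<in>set ks. snd q \<le> k) \<and>
          prod_list (map (\<lambda>k. fst q - sc (vv powi k)) ks) * (R k * x) = 0" using ks' by auto
      qed
    qed
    have zero: "R k * x = 0" if k: "k \<in> set ks" and lt: "s - k < S" for k
      using IH[OF cmL conjunct2[OF comp[OF k]] conjunct1[OF comp[OF k]]] lt by simp
    show "(s < sum_list (map snd (p # L)) \<longrightarrow> x = 0) \<and>
          (s = sum_list (map snd (p # L)) \<longrightarrow> (\<forall>p\<in>set (p # L). fst p * x = sc (vv powi snd p) * x))"
    proof (intro conjI impI)
      assume "s < sum_list (map snd (p # L))"
      then have "s < c + S" by (simp add: p S_def)
      then have "\<forall>k\<in>set ks. R k * x = 0" using zero ks(2) by fastforce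
      then have "(\<Sum>k\<in>set ks. R k * x) = 0" by simp
      then show "x = 0" using xsum by metis
    next
      assume "s = sum_list (map snd (p # L))"
      then have se: "s = c + S" by (simp add: p S_def)
      have "(\<Sum>k\<in>set ks. R k * x) = (\<Sum>k\<in>set ks. if k = c then R c * x else 0)"
        using zero ks(2) se by (intro sum.cong) (auto, fastforce)
      also have "\<dots> = (if c \<in> set ks then R c * x else 0)"
        by (rule sum.delta) simp
      finally have xc: "x = (if c \<in> set ks then R c * x else 0)" using xsum by metis
      show "\<forall>p\<in>set (p # L). fst p * x = sc (vv powi snd p) * x"
      proof (cases "c \<in> set ks")
        case False
        then have x0: "x = 0" using xc by metis
        show ?thesis by (simp add: x0)
      next
        case True
        have x1: "x = R c * x" using xc True by metis
        have "A * x = sc (vv powi c) * x" using xeig[OF True] x1[symmetric] by simp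
        moreover have "\<forall>q\<in>set L. fst q * x = sc (vv powi snd q) * x"
          using IH[OF cmL conjunct2[OF comp[OF True]] conjunct1[OF comp[OF True]]] se x1[symmetric] by simp
        ultimately show ?thesis by (simp add: p)
      qed
    qed
  qed
  show ?case using main by blast
qed
end


lemma prod_zero_lemma:
  fixes z :: "'a::ring_1"
  assumes "z * g = 0" "g \<in> set gs" "\<And>h. h \<in> set gs \<Longrightarrow> z * h = h * z"
  shows "z * prod_list gs = 0"
  using assms
proof (induct gs)
  case Nil then show ?case by simp
next
  case (Cons h gs)
  show ?case
  proof (cases "h = g")
    case True
    then show ?thesis using Cons.prems by (simp add: mult.assoc[symmetric])
  next
    case False
    then have "z * prod_list gs = 0" using Cons by auto
    moreover have "z * h = h * z" using Cons.prems by auto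
    ultimately show ?thesis by (simp add: mult.assoc[symmetric]) (metis mult.assoc mult_zero_right)
  qed
qed

lemma prod_fix_lemma:
  fixes y :: "'a::ring_1"
  shows "(\<And>g. g \<in> set gs \<Longrightarrow> g * y = y) \<Longrightarrow> prod_list gs * y = y"
  by (induct gs) (simp_all add: mult.assoc)

definition qint :: "int \<Rightarrow> qv" where
  "qint d = (vv powi d - vv powi (- d)) / (vv - inverse vv)"

lemma qint0: "qint 0 = 0" by (simp add: qint_def)
lemma qintm1: "qint (-1) = -1"
  using vv_d by (simp add: qint_def power_int_minus divide_eq_minus_1_iff)
lemma qint2: "qint 2 = vv + inverse vv"
proof -
  have "vv powi 2 - vv powi (-2) = (vv + inverse vv) * (vv - inverse vv)"
    by (simp add: power_int_minus algebra_simps power2_eq_square power_inverse)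
  then show ?thesis using vv_d by (simp add: qint_def)
qed

locale tt = qa sc for sc :: "qv \<Rightarrow> 'a::ring_1" +
  fixes n r :: nat and E F K Ki :: "nat \<Rightarrow> 'a"
  assumes rel: "T_relations sc n r E F K Ki"
  and n2: "2 \<le> n"
begin

lemma Rs1: "(\<forall>i\<in>{1..n}. \<forall>j\<in>{1..n}. K i * K j = K j * K i)"
  using rel unfolding T_relations_def by (elim conjE) assumption
lemma Rs2: "(\<forall>i\<in>{1..n}. K i * Ki i = 1 \<and> Ki i * K i = 1)"
  using rel unfolding T_relations_def by (elim conjE) assumption
lemma Rs3: "(\<forall>i\<in>{1..n}. \<forall>j\<in>{1..n}. K i * E j = sc (vv powi epsp n i j) * E j * K i)"
  using rel unfolding T_relations_def by (elim conjE) assumption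
lemma Rs4: "(\<forall>i\<in>{1..n}. \<forall>j\<in>{1..n}. K i * F j = sc (vv powi (- epsp n i j)) * F j * K i)"
  using rel unfolding T_relations_def by (elim conjE) assumption
lemma Rs5: "(\<forall>i\<in>{1..n}. \<forall>j\<in>{1..n}. E i * F j - F j * E i =
         (if i = j then sc (inverse (vv - inverse vv)) * (K i * Ki (nxt n i) - Ki i * K (nxt n i))
          else 0))"
  using rel unfolding T_relations_def by (elim conjE) assumption
lemma Rs6: "(\<forall>i\<in>{1..n}. \<forall>j\<in>{1..n}. j \<noteq> nxt n i \<and> j \<noteq> prv n i \<longrightarrow>
         E i * E j = E j * E i \<and> F i * F j = F j * F i)"
  using rel unfolding T_relations_def by (elim conjE) assumption
lemma Rs7: "(\<forall>i\<in>{1..n}. \<forall>j\<in>{1..n}. j = nxt n i \<or> j = prv n i \<longrightarrow>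
         E i * E i * E j - sc (vv + inverse vv) * E i * E j * E i + E j * E i * E i = 0 \<and>
         F i * F i * F j - sc (vv + inverse vv) * F i * F j * F i + F j * F i * F i = 0)"
  using rel unfolding T_relations_def by (elim conjE) assumption
lemma Rs8: "prod_list (map K [1..<n+1]) = sc (vv ^ r)"
  using rel unfolding T_relations_def by (elim conjE) assumption
lemma Rs9: "(\<forall>i\<in>{1..n}. prod_list (map (\<lambda>j. K i - sc (vv ^ j)) [0..<r+1]) = 0)"
  using rel unfolding T_relations_def by (elim conjE) assumption


lemma KK: "i \<in> {1..n} \<Longrightarrow> j \<in> {1..n} \<Longrightarrow> K i * K j = K j * K i"
  using Rs1 by blast
lemma KKi1: "i \<in> {1..n} \<Longrightarrow> K i * Ki i = 1"
  using Rs2 by blast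
lemma KKi2: "i \<in> {1..n} \<Longrightarrow> Ki i * K i = 1"
  using Rs2 by blast
lemma KE: "i \<in> {1..n} \<Longrightarrow> j \<in> {1..n} \<Longrightarrow> K i * E j = sc (vv powi epsp n i j) * E j * K i"
  using Rs3 by blast
lemma KF: "i \<in> {1..n} \<Longrightarrow> j \<in> {1..n} \<Longrightarrow> K i * F j = sc (vv powi (- epsp n i j)) * F j * K i"
  using Rs4 by blast
lemma EF: "i \<in> {1..n} \<Longrightarrow> j \<in> {1..n} \<Longrightarrow> E i * F j - F j * E i =
         (if i = j then sc (inverse (vv - inverse vv)) * (K i * Ki (nxt n i) - Ki i * K (nxt n i))
          else 0)"
  using Rs5 by blast
lemma EEc: "i \<in> {1..n} \<Longrightarrow> j \<in> {1..n} \<Longrightarrow> j \<noteq> nxt n i \<Longrightarrow> j \<noteq> prv n i \<Longrightarrow> E i * E j = E j * E i"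
  using Rs6 by blast
lemma Serre: "i \<in> {1..n} \<Longrightarrow> j \<in> {1..n} \<Longrightarrow> j = prv n i \<Longrightarrow>
         E i * E i * E j - sc (vv + inverse vv) * E i * E j * E i + E j * E i * E i = 0"
  using Rs7 by blast
lemma prodK: "prod_list (map K [1..<n+1]) = sc (vv ^ r)"
  using Rs8 by blast
lemma minK: "i \<in> {1..n} \<Longrightarrow> prod_list (map (\<lambda>j. K i - sc (vv ^ j)) [0..<r+1]) = 0"
  using Rs9 by blast

lemma FEc: "i \<in> {1..n} \<Longrightarrow> j \<in> {1..n} \<Longrightarrow> i \<noteq> j \<Longrightarrow> F j * E i = E i * F j"
  using EF[of i j] by simp

lemma KKi: assumes "i \<in> {1..n}" "j \<in> {1..n}" shows "K j * Ki i = Ki i * K j"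
proof -
  have "Ki i * K j = Ki i * K j * (K i * Ki i)" using KKi1[OF assms(1)] by simp
  also have "\<dots> = Ki i * (K j * K i) * Ki i" by (simp add: mult.assoc)
  also have "\<dots> = (Ki i * K i) * K j * Ki i" using KK[OF assms(1,2)] by (simp add: mult.assoc)
  also have "\<dots> = K j * Ki i" using KKi2[OF assms(1)] by simp
  finally show ?thesis by simp
qed

lemma KiKi: assumes "i \<in> {1..n}" "j \<in> {1..n}" shows "Ki j * Ki i = Ki i * Ki j"
proof -
  have "Ki i * Ki j = Ki i * Ki j * (K i * Ki i)" using KKi1[OF assms(1)] by simp
  also have "\<dots> = Ki i * (Ki j * K i) * Ki i" by (simp add: mult.assoc)
  also have "\<dots> = (Ki i * K i) * Ki j * Ki i" using KKi[OF assms(2,1)] by (simp add: mult.assoc)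
  also have "\<dots> = Ki j * Ki i" using KKi2[OF assms(1)] by simp
  finally show ?thesis by simp
qed

definition wt :: "(nat \<Rightarrow> int) \<Rightarrow> 'a \<Rightarrow> bool" where
  "wt la x \<longleftrightarrow> (\<forall>i\<in>{1..n}. K i * x = sc (vv powi la i) * x)"

lemma wt_E:
  assumes "wt la x" "j \<in> {1..n}"
  shows "wt (\<lambda>i. la i + epsp n i j) (E j * x)"
  unfolding wt_def
proof
  fix i assume i: "i \<in> {1..n}"
  have "K i * (E j * x) = sc (vv powi epsp n i j) * E j * (K i * x)"
    using KE[OF i assms(2)] by (metis mult.assoc)
  also have "\<dots> = sc (vv powi epsp n i j) * (E j * (sc (vv powi la i) * x))"
    using assms(1) i by (simp add: wt_def mult.assoc)
  also have "\<dots> = sc (vv powi epsp n i j) * (sc (vv powi la i) * (E j * x))"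
    by (simp only: sc_left[of "E j"])
  also have "\<dots> = sc (vv powi epsp n i j * vv powi la i) * (E j * x)"
    by (simp only: sc_mult mult.assoc)
  also have "vv powi epsp n i j * vv powi la i = vv powi (la i + epsp n i j)"
    by (simp add: power_int_add vv_nz mult.commute)
  finally show "K i * (E j * x) = sc (vv powi (la i + epsp n i j)) * (E j * x)" .
qed

lemma wt_F:
  assumes "wt la x" "j \<in> {1..n}"
  shows "wt (\<lambda>i. la i - epsp n i j) (F j * x)"
  unfolding wt_def
proof
  fix i assume i: "i \<in> {1..n}"
  have "K i * (F j * x) = sc (vv powi (- epsp n i j)) * F j * (K i * x)"
    using KF[OF i assms(2)] by (metis mult.assoc)
  also have "\<dots> = sc (vv powi (- epsp n i j)) * (F j * (sc (vv powi la i) * x))"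
    using assms(1) i by (simp add: wt_def mult.assoc)
  also have "\<dots> = sc (vv powi (- epsp n i j)) * (sc (vv powi la i) * (F j * x))"
    by (simp only: sc_left[of "F j"])
  also have "\<dots> = sc (vv powi (- epsp n i j) * vv powi la i) * (F j * x)"
    by (simp only: sc_mult mult.assoc)
  also have "vv powi (- epsp n i j) * vv powi la i = vv powi (la i - epsp n i j)"
    by (subst diff_conv_add_uminus, subst power_int_add) (simp_all add: vv_nz mult.commute)
  finally show "K i * (F j * x) = sc (vv powi (la i - epsp n i j)) * (F j * x)" .
qed

lemma wt_Ki:
  assumes "wt la x" "i \<in> {1..n}"
  shows "Ki i * x = sc (vv powi (- la i)) * x"
proof -
  have "sc (vv powi (- la i)) * x = sc (vv powi (- la i)) * (Ki i * (K i * x))"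
    using KKi2[OF assms(2)] by (simp add: mult.assoc[symmetric])
  also have "\<dots> = sc (vv powi (- la i)) * (Ki i * (sc (vv powi la i) * x))"
    using assms by (simp add: wt_def)
  also have "\<dots> = sc (vv powi (- la i)) * (sc (vv powi la i) * (Ki i * x))"
    by (simp only: sc_left[of "Ki i"])
  also have "\<dots> = Ki i * (sc (vv powi (- la i) * vv powi la i) * x)"
    by (simp only: sc_mult mult.assoc sc_left[of "Ki i"])
  also have "vv powi (- la i) * vv powi la i = 1"
    by (simp add: power_int_minus vv_nz)
  finally show ?thesis by simp
qed

lemma prod_eig:
  assumes "A * x = sc e * x"
  shows "prod_list (map (\<lambda>j. A - sc (f j)) js) * x = sc (prod_list (map (\<lambda>j. e - f j) js)) * x"
proof (induct js)
  case Nil then show ?case by simp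
next
  case (Cons j js)
  have "prod_list (map (\<lambda>j. A - sc (f j)) (j # js)) * x = (A - sc (f j)) * (sc (prod_list (map (\<lambda>j. e - f j) js)) * x)"
    using Cons by (simp add: mult.assoc)
  also have "\<dots> = sc (prod_list (map (\<lambda>j. e - f j) js)) * ((A - sc (f j)) * x)"
    by (rule sc_left)
  also have "(A - sc (f j)) * x = sc (e - f j) * x" using assms by (simp add: left_diff_distrib)
  also have "sc (prod_list (map (\<lambda>j. e - f j) js)) * (sc (e - f j) * x) = sc (prod_list (map (\<lambda>j. e - f j) js) * (e - f j)) * x"
    by (simp only: sc_mult mult.assoc)
  also have "prod_list (map (\<lambda>j. e - f j) js) * (e - f j) = prod_list (map (\<lambda>j. e - f j) (j # js))"
    by (simp add: mult.commute)
  finally show ?case .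
qed

lemma wt_zero:
  assumes "wt la x" "i \<in> {1..n}" "la i = -1"
  shows "x = 0"
proof -
  have "K i * x = sc (vv powi (-1)) * x" using assms by (simp add: wt_def)
  then have "prod_list (map (\<lambda>j. K i - sc (vv ^ j)) [0..<r+1]) * x
      = sc (prod_list (map (\<lambda>j. vv powi (-1) - vv ^ j) [0..<r+1])) * x"
    by (rule prod_eig)
  then have "sc (prod_list (map (\<lambda>j. vv powi (-1) - vv ^ j) [0..<r+1])) * x = 0"
    using minK[OF assms(2)] by simp
  moreover have "prod_list (map (\<lambda>j. vv powi (-1) - vv ^ j) [0..<r+1]) \<noteq> 0"
  proof
    assume "prod_list (map (\<lambda>j. vv powi (-1) - vv ^ j) [0..<r+1]) = 0"
    then obtain j where "vv powi (-1) - vv ^ j = 0" by (auto simp: prod_list_zero_iff)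
    then have "vv powi (-1) = vv powi (int j)" by simp
    then show False using vv_powi_inj by fastforce
  qed
  ultimately show ?thesis using sc_cancel by blast
qed

lemma wt_comm:
  assumes "wt la x" "j \<in> {1..n}" "j < n"
  shows "E j * (F j * x) - F j * (E j * x) = sc (qint (la j - la (j+1))) * x"
proof -
  have nx: "nxt n j = j + 1" using assms by (simp add: nxt_def)
  have j1: "j + 1 \<in> {1..n}" using assms by simp
  have kx: "(K j * Ki (j+1) - Ki j * K (j+1)) * x = sc (vv powi (la j - la (j+1)) - vv powi (- (la j - la (j+1)))) * x"
  proof -
    have "(K j * Ki (j+1) - Ki j * K (j+1)) * x = K j * (Ki (j+1) * x) - Ki j * (K (j+1) * x)"
      by (simp add: left_diff_distrib mult.assoc)
    also have "\<dots> = K j * (sc (vv powi (- la (j+1))) * x) - Ki j * (sc (vv powi (la (j+1))) * x)"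
      using wt_Ki[OF assms(1) j1] assms(1) j1 by (simp add: wt_def)
    also have "\<dots> = sc (vv powi (- la (j+1))) * (K j * x) - sc (vv powi (la (j+1))) * (Ki j * x)"
      by (simp only: sc_left)
    also have "\<dots> = sc (vv powi (- la (j+1))) * (sc (vv powi la j) * x) - sc (vv powi (la (j+1))) * (sc (vv powi (- la j)) * x)"
      using wt_Ki[OF assms(1) assms(2)] assms(1,2) by (simp add: wt_def)
    also have "\<dots> = sc (vv powi (- la (j+1)) * vv powi la j) * x - sc (vv powi (la (j+1)) * vv powi (- la j)) * x"
      by (simp only: sc_mult mult.assoc)
    also have "vv powi (- la (j+1)) * vv powi la j = vv powi (la j - la (j+1))"
      by (simp add: power_int_add[symmetric] vv_nz)
    also have "vv powi (la (j+1)) * vv powi (- la j) = vv powi (- (la j - la (j+1)))"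
      by (simp add: power_int_add[symmetric] vv_nz)
    finally show ?thesis by (simp add: left_diff_distrib)
  qed
  have q: "qint (la j - la (j+1)) = inverse (vv - inverse vv) * (vv powi (la j - la (j+1)) - vv powi (- (la j - la (j+1))))"
    by (simp add: qint_def divide_inverse mult.commute)
  have "E j * (F j * x) - F j * (E j * x) = (E j * F j - F j * E j) * x"
    by (simp add: left_diff_distrib mult.assoc)
  also have "\<dots> = sc (inverse (vv - inverse vv)) * ((K j * Ki (j+1) - Ki j * K (j+1)) * x)"
    using EF[OF assms(2) assms(2)] nx by (simp add: mult.assoc)
  also have "\<dots> = sc (qint (la j - la (j+1))) * x"
    unfolding kx q by (simp only: sc_mult mult.assoc)
  finally show ?thesis .
qed


lemma set_upt1: "set [1..<m+1] = {1..m}" by auto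

definition G :: "nat \<Rightarrow> 'a" where
  "G i = prod_list (map (\<lambda>s. (K i * sc (vv powi (1 - int s)) - Ki i * sc (vv powi (int s - 1)))
         * sc (inverse (vv ^ s - inverse (vv ^ s)))) [1..<omega r i + 1])"

lemma P_eq: "one_lam sc n K Ki (omega r) = prod_list (map G [1..<n+1])"
  unfolding one_lam_def G_def ..

lemma G_le: "i \<le> r \<Longrightarrow> G i = (K i - Ki i) * sc (inverse (vv - inverse vv))"
  by (simp add: G_def omega_def)
lemma G_gt: "\<not> i \<le> r \<Longrightarrow> G i = 1"
  by (simp add: G_def omega_def)

lemma cmG:
  assumes "\<And>j. j \<in> {1..n} \<Longrightarrow> z * K j = K j * z" "\<And>j. j \<in> {1..n} \<Longrightarrow> z * Ki j = Ki j * z" "i \<in> {1..n}"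
  shows "z * G i = G i * z"
  unfolding G_def
  by (rule cm_prod) (auto intro!: cm_mult[OF cm_diff[OF cm_mult[OF assms(1)[OF assms(3)] sc_cm] cm_mult[OF assms(2)[OF assms(3)] sc_cm]] sc_cm])

definition Z :: "nat \<Rightarrow> 'a" where
  "Z j = prod_list (map (\<lambda>k. K j - sc (vv ^ k)) [1..<r+1])"

lemma Z_alt: "prod_list (map (\<lambda>k. K j - sc (vv powi k)) (map int [1..<r+1])) = Z j"
  by (simp add: Z_def o_def)

lemma Z_cm:
  assumes j: "j \<in> {1..n}"
  shows "\<And>i. i \<in> {1..n} \<Longrightarrow> Z j * K i = K i * Z j" "\<And>i. i \<in> {1..n} \<Longrightarrow> Z j * Ki i = Ki i * Z j"
proof -
  fix i assume i: "i \<in> {1..n}"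
  have "K i * Z j = Z j * K i" unfolding Z_def
    by (rule cm_prod) (auto intro!: cm_diff sc_cm KK[OF i j])
  then show "Z j * K i = K i * Z j" by simp
  have "Ki i * Z j = Z j * Ki i" unfolding Z_def
    by (rule cm_prod) (auto intro!: cm_diff sc_cm KKi[OF i j, symmetric])
  then show "Z j * Ki i = Ki i * Z j" by simp
qed

lemma ZG: assumes j: "j \<in> {1..n}" "j \<le> r" shows "Z j * G j = 0"
proof -
  have kk: "K j * (K j * Ki j) = K j" using KKi1[OF j(1)] by simp
  have e1: "K j - Ki j = (K j - 1) * ((K j + 1) * Ki j)"
    using kk by (simp add: algebra_simps)
  have e2: "Z j * (K j - 1) = (K j - 1) * Z j"
    unfolding Z_def by (rule comm_prodA[symmetric]) (simp add: algebra_simps)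
  have e3: "(K j - 1) * Z j = prod_list (map (\<lambda>i. K j - sc (vv ^ i)) [0..<r+1])"
    unfolding Z_def by (simp add: upt_conv_Cons del: upt_Suc)
  have "Z j * G j = Z j * (K j - 1) * ((K j + 1) * Ki j) * sc (inverse (vv - inverse vv))"
    using j by (simp add: G_le e1 mult.assoc)
  also have "\<dots> = 0" unfolding e2 e3 minK[OF j(1)] by simp
  finally show ?thesis .
qed

lemma ZP: assumes j: "j \<in> {1..n}" "j \<le> r" shows "Z j * one_lam sc n K Ki (omega r) = 0"
  unfolding P_eq
proof (rule prod_zero_lemma[OF ZG[OF j]])
  show "G j \<in> set (map G [1..<n+1])" unfolding set_map set_upt1 using j by auto
  fix h assume "h \<in> set (map G [1..<n+1])"
  then obtain i where i: "i \<in> {1..n}" and h: "h = G i" unfolding set_map set_upt1 by auto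
  show "Z j * h = h * Z j" unfolding h by (rule cmG[OF Z_cm(1)[OF j(1)] Z_cm(2)[OF j(1)] i])
qed

lemma sum_omega: "sum_list (map (\<lambda>i. int (omega r i)) [1..<m+1]) = int (min m r)"
  by (induct m) (auto simp: omega_def)

lemma wtP: assumes "r \<le> n" shows "wt (\<lambda>i. int (omega r i)) (one_lam sc n K Ki (omega r))"
proof -
  define P where "P = one_lam sc n K Ki (omega r)"
  define L where "L = map (\<lambda>i. (K i, int (omega r i))) [1..<n+1]"
  have cm: "\<forall>p\<in>set L. \<forall>q\<in>set L. fst p * fst q = fst q * fst p"
    unfolding L_def by (auto intro: KK)
  have rl: "\<forall>p\<in>set L. \<exists>ks. distinct ks \<and> (\<forall>k\<in>set ks. snd p \<le> k) \<and>
          prod_list (map (\<lambda>k. fst p - sc (vv powi k)) ks) * P = 0"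
  proof
    fix p assume "p \<in> set L"
    then obtain i where i: "i \<in> {1..n}" and p: "p = (K i, int (omega r i))" unfolding L_def set_map set_upt1 by auto
    show "\<exists>ks. distinct ks \<and> (\<forall>k\<in>set ks. snd p \<le> k) \<and>
          prod_list (map (\<lambda>k. fst p - sc (vv powi k)) ks) * P = 0"
    proof (cases "i \<le> r")
      case True
      have a1: "prod_list (map (\<lambda>k. K i - sc (vv powi k)) (map int [1..<r+1])) * P = 0"
        unfolding Z_alt P_def using ZP[OF i True] .
      have a2: "distinct (map int [1..<r+1])" by (simp add: distinct_map)
      have a3: "\<forall>k\<in>set (map int [1..<r+1]). snd p \<le> k" using True by (auto simp: p omega_def)
      show ?thesis unfolding p fst_conv snd_conv using a1 a2 a3[unfolded p snd_conv] by blast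
    next
      case False
      have "prod_list (map (\<lambda>k. K i - sc (vv powi k)) (map int [0..<r+1])) = 0"
        using minK[OF i] by (simp add: o_def)
      moreover have "distinct (map int [0..<r+1])" by (auto simp: distinct_map inj_on_def)
      moreover have "\<forall>k\<in>set (map int [0..<r+1]). snd p \<le> k" using False by (auto simp: p omega_def)
      ultimately have "distinct (map int [0..<r+1]) \<and> (\<forall>k\<in>set (map int [0..<r+1]). snd p \<le> k) \<and>
          prod_list (map (\<lambda>k. fst p - sc (vv powi k)) (map int [0..<r+1])) * P = 0"
        by (simp add: p)
      then show ?thesis by blast
    qed
  qed
  have sl: "sum_list (map snd L) = int r"
    using sum_omega[of n] assms unfolding L_def by (simp add: o_def min_def)
  have pr: "prod_list (map fst L) * P = sc (vv powi int r) * P"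
    unfolding L_def using prodK by (simp add: o_def)
  have D: "int r \<le> sum_list (map snd L)" using sl by simp
  have h: "(int r < sum_list (map snd L) \<longrightarrow> P = 0) \<and>
     (int r = sum_list (map snd L) \<longrightarrow> (\<forall>p\<in>set L. fst p * P = sc (vv powi snd p) * P))"
  proof -
    have l: "\<forall>x s. (\<forall>p\<in>set L. \<forall>q\<in>set L. fst p * fst q = fst q * fst p) \<longrightarrow>
     (\<forall>p\<in>set L. \<exists>ks. distinct ks \<and> (\<forall>k\<in>set ks. snd p \<le> k) \<and>
          prod_list (map (\<lambda>k. fst p - sc (vv powi k)) ks) * x = 0) \<longrightarrow>
     prod_list (map fst L) * x = sc (vv powi s) * x \<longrightarrow> s \<le> sum_list (map snd L) \<longrightarrow>
     (s < sum_list (map snd L) \<longrightarrow> x = 0) \<and>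
     (s = sum_list (map snd L) \<longrightarrow> (\<forall>p\<in>set L. fst p * x = sc (vv powi snd p) * x))"
      by (rule lemB)
    show ?thesis using mp[OF mp[OF mp[OF mp[OF spec[OF spec[OF l, of P], of "int r"] cm] rl] pr] D] .
  qed
  have "int r = sum_list (map snd L)" using sl by simp
  from mp[OF conjunct2[OF h] this] have "\<forall>p\<in>set L. fst p * P = sc (vv powi snd p) * P" .
  then show ?thesis unfolding wt_def P_def[symmetric] L_def by auto
qed

lemma Pfix:
  assumes "wt (\<lambda>i. int (omega r i)) y"
  shows "one_lam sc n K Ki (omega r) * y = y"
  unfolding P_eq
proof (rule prod_fix_lemma)
  fix g assume "g \<in> set (map G [1..<n+1])"
  then obtain i where i: "i \<in> {1..n}" and g: "g = G i" unfolding set_map set_upt1 by auto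
  show "g * y = y"
  proof (cases "i \<le> r")
    case False then show ?thesis by (simp add: g G_gt)
  next
    case True
    have Ky: "K i * y = sc vv * y" using assms i True by (simp add: wt_def omega_def)
    have Kiy: "Ki i * y = sc (inverse vv) * y" using wt_Ki[OF assms i] True by (simp add: omega_def power_int_minus)
    have "g * y = sc (inverse (vv - inverse vv)) * ((K i - Ki i) * y)"
      using True by (simp add: g G_le mult.assoc sc_comm)
    also have "\<dots> = sc (inverse (vv - inverse vv) * (vv - inverse vv)) * y"
      by (simp only: left_diff_distrib Ky Kiy sc_diff sc_mult mult.assoc right_diff_distrib)
    also have "\<dots> = y" using vv_d by simp
    finally show ?thesis .
  qed
qed

lemma wt_cong: "wt la x \<Longrightarrow> (\<And>i. i \<in> {1..n} \<Longrightarrow> la i = la' i) \<Longrightarrow> wt la' x"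
  by (simp add: wt_def)

lemma wt_word:
  assumes "wt la x" "set js \<subseteq> {1..n}"
  shows "wt (\<lambda>k. la k + sum_list (map (epsp n k) js)) (prod_list (map E js) * x)"
  using assms(2)
proof (induct js)
  case Nil then show ?case using assms(1) by simp
next
  case (Cons j js)
  then have j: "j \<in> {1..n}" and IH: "wt (\<lambda>k. la k + sum_list (map (epsp n k) js)) (prod_list (map E js) * x)" by auto
  have "wt (\<lambda>k. (la k + sum_list (map (epsp n k) js)) + epsp n k j) (E j * (prod_list (map E js) * x))"
    by (rule wt_E[OF IH j])
  moreover have "(\<lambda>k. (la k + sum_list (map (epsp n k) js)) + epsp n k j) = (\<lambda>k. la k + sum_list (map (epsp n k) (j # js)))"
    by (simp add: fun_eq_iff algebra_simps)
  ultimately show ?case by (simp add: mult.assoc)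
qed

lemma prv_in: "k \<in> {1..n} \<Longrightarrow> prv n k \<in> {1..n}"
  unfolding prv_def using n2 by auto
lemma prv_ne: "k \<in> {1..n} \<Longrightarrow> prv n k \<noteq> k"
  using n2 by (auto simp: prv_def)
lemma eps_split: "k \<in> {1..n} \<Longrightarrow> epsp n k j = (if j = k then 1 else 0) + (if j = prv n k then -1 else 0)"
  using prv_ne[of k] by (auto simp: epsp_def)
lemma eps_sum_all: "k \<in> {1..n} \<Longrightarrow> (\<Sum>j\<in>{1..n}. epsp n k j) = 0"
  using prv_in[of k] by (simp add: eps_split sum.distrib)
lemma eps_sum_none: "k \<notin> S \<Longrightarrow> prv n k \<notin> S \<Longrightarrow> (\<Sum>j\<in>S. epsp n k j) = 0"
  by (rule sum.neutral) (auto simp: epsp_def)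
lemma eps_sum_m1: "finite S \<Longrightarrow> k \<in> {1..n} \<Longrightarrow> k \<notin> S \<Longrightarrow> prv n k \<in> S \<Longrightarrow> (\<Sum>j\<in>S. epsp n k j) = -1"
  by (simp add: eps_split sum.distrib)

lemma core:
  assumes Y: "wt mu Y" and a: "1 \<le> a" "a + 2 \<le> n" and b: "b = a + 1"
    and m: "mu a = 0" "mu b = 1" "mu (b+1) = 1"
  shows "F a * (E a * (E b * (E a * Y))) = E b * (E a * (F b * (E b * Y)))"
proof -
  have ain: "a \<in> {1..n}" and bin: "b \<in> {1..n}" and an: "a < n" and bn: "b < n"
    using a b by auto
  have pb: "prv n b = a" using a b by (simp add: prv_def)
  have e_aa: "epsp n a a = 1" and e_ba: "epsp n b a = -1" and e_ab: "epsp n a b = 0"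
    and e_bb: "epsp n b b = 1" and e_cb: "epsp n (b+1) b = -1"
    using a b by (auto simp: epsp_def prv_def)
  have ab1: "a + 1 = b" "Suc a = b" using b by simp_all
  have m3: "mu (Suc b) = 1" using m(3) by simp
  have e_cb': "epsp n (Suc b) b = -1" using e_cb by simp
  have FaY: "F a * Y = 0"
    by (rule wt_zero[OF wt_F[OF Y ain] ain]) (simp add: m e_aa)
  have c1: "E a * (F a * Y) - F a * (E a * Y) = sc (qint (mu a - mu (a+1))) * Y"
    by (rule wt_comm[OF Y ain an])
  have FEY: "F a * (E a * Y) = Y"
    using c1 by (simp add: FaY ab1 m qintm1)
  define W where "W = E b * (E a * Y)"
  have wW: "wt (\<lambda>i. (mu i + epsp n i a) + epsp n i b) W"
    unfolding W_def by (rule wt_E[OF wt_E[OF Y ain] bin])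
  have FaW: "F a * W = E b * Y"
  proof -
    have "F a * W = (F a * E b) * (E a * Y)" by (simp add: W_def mult.assoc)
    also have "F a * E b = E b * F a" using FEc[OF bin ain] b by simp
    finally show ?thesis using FEY by (simp add: mult.assoc)
  qed
  have c3: "E a * (F a * W) - F a * (E a * W) = sc (qint ((mu a + epsp n a a + epsp n a b) - (mu (a+1) + epsp n (a+1) a + epsp n (a+1) b))) * W"
    by (rule wt_comm[OF wW ain an])
  have LHS: "F a * (E a * W) = E a * (E b * Y)"
    using c3 by (simp add: ab1 m e_aa e_ab e_ba e_bb qint0 FaW)
  define Z where "Z = F b * Y"
  have wZ: "wt (\<lambda>i. mu i - epsp n i b) Z" unfolding Z_def by (rule wt_F[OF Y bin])
  have EaZ: "E a * Z = 0"
    by (rule wt_zero[OF wt_E[OF wZ ain] bin]) (simp add: m e_bb e_ba)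
  have c4: "E b * (F b * Y) - F b * (E b * Y) = sc (qint (mu b - mu (b+1))) * Y"
    by (rule wt_comm[OF Y bin bn])
  have FEbY: "F b * (E b * Y) = E b * Z"
    using c4 by (simp add: m m3 qint0 Z_def)
  have w4: "wt (\<lambda>i. mu i + epsp n i b) (E b * Y)" by (rule wt_E[OF Y bin])
  have EEbY: "E b * (E b * Y) = 0"
  proof (rule wt_zero[OF wt_E[OF w4 bin]])
    show "b + 1 \<in> {1..n}" using bn by simp
    show "mu (b+1) + epsp n (b+1) b + epsp n (b+1) b = -1" by (simp add: m m3 e_cb e_cb')
  qed
  have c5: "E b * (F b * (E b * Y)) - F b * (E b * (E b * Y)) = sc (qint ((mu b + epsp n b b) - (mu (b+1) + epsp n (b+1) b))) * (E b * Y)"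
    by (rule wt_comm[OF w4 bin bn])
  have EEZ: "E b * (E b * Z) = sc (vv + inverse vv) * (E b * Y)"
    using c5 by (simp add: FEbY[symmetric] EEbY m m3 e_bb e_cb e_cb' qint2)
  have ser: "E b * E b * E a - sc (vv + inverse vv) * E b * E a * E b + E a * E b * E b = 0"
    by (rule Serre[OF bin ain pb[symmetric]])
  have "(E b * E b * E a - sc (vv + inverse vv) * E b * E a * E b + E a * E b * E b) * Z = 0"
    using ser by simp
  then have "E b * (E b * (E a * Z)) - sc (vv + inverse vv) * (E b * (E a * (E b * Z))) + E a * (E b * (E b * Z)) = 0"
    by (simp add: algebra_simps)
  then have "sc (vv + inverse vv) * (E b * (E a * (E b * Z))) = E a * (sc (vv + inverse vv) * (E b * Y))"
    by (simp add: EaZ EEZ algebra_simps)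
  also have "\<dots> = sc (vv + inverse vv) * (E a * (E b * Y))" by (rule sc_left)
  finally have "sc (vv + inverse vv) * (E b * (E a * (E b * Z))) = sc (vv + inverse vv) * (E a * (E b * Y))" .
  then have "E b * (E a * (E b * Z)) = E a * (E b * Y)"
    by (metis sc_inv vv_s)
  then show ?thesis using LHS FEbY by (simp add: W_def)
qed
end

theorem corollary2p3p7:
  fixes sc :: "qv \<Rightarrow> 'a::ring_1" and E F K Ki :: "nat \<Rightarrow> 'a" and n r i :: nat
  assumes "qv_algebra sc"
    and "T_relations sc n r E F K Ki"
    and "r \<ge> 3" and "n > r" and "1 < i" and "i < r"
  shows "zeta_s sc n r E F K Ki (i - 1) * zeta_rho sc n r E K Ki
       = zeta_rho sc n r E K Ki * zeta_s sc n r E F K Ki i"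
proof -
  interpret tt sc n r E F K Ki
    apply unfold_locales using assms by auto
  define P where "P = one_lam sc n K Ki (omega r)"
  define om where "om = (\<lambda>i. int (omega r i))"
  define a where "a = i - 1"
  have ia: "i = a + 1" "Suc a = i" using assms(5) unfolding a_def by auto
  have a1: "1 \<le> a" "a + 2 \<le> n" using assms unfolding a_def by auto
  have rn: "r \<le> n" using assms by simp
  have wP: "wt om P" unfolding P_def om_def by (rule wtP[OF rn])
  have Pfx: "\<And>y. wt om y \<Longrightarrow> P * y = y" unfolding P_def om_def by (rule Pfix)
  define pA where "pA = prod_list (map E [r..<n])"
  define pBhi where "pBhi = prod_list (map E (rev [i+1..<r]))"
  define pBlo where "pBlo = prod_list (map E (rev [1..<i-1]))"
  have split: "[1..<r] = [1..<i-1] @ [i-1, i] @ [i+1..<r]"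
  proof -
    have rr: "(i-1) + (r - (i-1)) = r" using assms by simp
    have "[1..<(i-1) + (r - (i-1))] = [1..<i-1] @ [i-1..<(i-1) + (r - (i-1))]"
      by (rule upt_add_eq_append) (use assms in simp)
    then have "[1..<r] = [1..<i-1] @ [i-1..<r]" unfolding rr .
    also have "[i-1..<r] = (i-1) # [i..<r]" using assms by (simp add: upt_conv_Cons)
    also have "[i..<r] = i # [i+1..<r]" using assms by (simp add: upt_conv_Cons)
    finally show ?thesis by simp
  qed
  have hB: "prod_list (map E (rev [1..<r])) = pBhi * (E i * (E a * pBlo))"
    unfolding split pBhi_def pBlo_def a_def by (simp add: mult.assoc)
  define Y where "Y = pBlo * (E n * P)"
  define X where "X = pA * prod_list (map E (rev [1..<r])) * E n"
  have zr: "zeta_rho sc n r E K Ki = X * P" unfolding zeta_rho_def X_def P_def pA_def ..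
  have XY: "X * P = pA * (pBhi * (E i * (E a * Y)))"
    unfolding X_def hB Y_def by (simp add: mult.assoc)
  have wXP: "wt om (X * P)"
  proof -
    define js where "js = [r..<n] @ rev [1..<r] @ [n]"
    have dj: "distinct js" unfolding js_def using assms by auto
    have sj: "set js = {1..n}" unfolding js_def using assms by auto
    have XPe: "X * P = prod_list (map E js) * P" unfolding X_def js_def pA_def by (simp add: mult.assoc)
    have "wt (\<lambda>k. om k + sum_list (map (epsp n k) js)) (prod_list (map E js) * P)"
      by (rule wt_word[OF wP]) (simp add: sj)
    then show ?thesis unfolding XPe
      by (rule wt_cong) (use eps_sum_all in \<open>simp add: sum_list_distinct_conv_sum_set[OF dj] sj\<close>)
  qed
  define mu where "mu = (\<lambda>k. om k + sum_list (map (epsp n k) (rev [1..<i-1] @ [n])))"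
  have wY: "wt mu Y"
  proof -
    have "Y = prod_list (map E (rev [1..<i-1] @ [n])) * P" unfolding Y_def pBlo_def by (simp add: mult.assoc)
    moreover have "wt mu (prod_list (map E (rev [1..<i-1] @ [n])) * P)"
      unfolding mu_def by (rule wt_word[OF wP]) (use assms in auto)
    ultimately show ?thesis by simp
  qed
  define S where "S = {1..<i-1} \<union> {n}"
  have muS: "mu k = om k + (\<Sum>j\<in>S. epsp n k j)" for k
    unfolding mu_def S_def by (subst sum_list_distinct_conv_sum_set) (use assms in auto)
  have m1: "mu a = 0"
  proof -
    have "prv n a \<in> S" using a1 assms unfolding S_def a_def prv_def by auto
    moreover have "a \<notin> S" using a1 assms unfolding S_def a_def by auto
    ultimately have "(\<Sum>j\<in>S. epsp n a j) = -1" using a1 by (intro eps_sum_m1) (auto simp: S_def)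
    then show ?thesis using a1 assms by (simp add: muS om_def omega_def a_def)
  qed
  have m2: "mu i = 1"
  proof -
    have "(\<Sum>j\<in>S. epsp n i j) = 0" using assms by (intro eps_sum_none) (auto simp: S_def prv_def)
    then show ?thesis using assms by (simp add: muS om_def omega_def)
  qed
  have m3: "mu (i+1) = 1"
  proof -
    have "(\<Sum>j\<in>S. epsp n (i+1) j) = 0" using assms by (intro eps_sum_none) (auto simp: S_def prv_def)
    then show ?thesis using assms by (simp add: muS om_def omega_def)
  qed
  have cor: "F a * (E a * (E i * (E a * Y))) = E i * (E a * (F i * (E i * Y)))"
    by (rule core[OF wY a1 ia(1) m1 m2 m3])
  have cA: "(F a * E a) * (pA * pBhi) = (pA * pBhi) * (F a * E a)"
  proof -
    have "(F a * E a) * prod_list (map E ([r..<n] @ rev [i+1..<r])) = prod_list (map E ([r..<n] @ rev [i+1..<r])) * (F a * E a)"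
    proof (rule cm_prod)
      fix x assume "x \<in> set (map E ([r..<n] @ rev [i+1..<r]))"
      then obtain j where j0: "j \<in> set ([r..<n] @ rev [i+1..<r])" and x: "x = E j" by (simp only: set_map) blast
      have j: "j \<in> {i+1..<n}" using j0 assms by auto
      have jn: "j \<in> {1..n}" and an: "a \<in> {1..n}" using j a1 by auto
      have "E a * E j = E j * E a" using j a1 assms
        by (intro EEc[OF an jn]) (auto simp: nxt_def prv_def a_def)
      moreover have "F a * E j = E j * F a" using j a1 assms by (intro FEc[OF jn an]) (auto simp: a_def)
      ultimately show "F a * E a * x = x * (F a * E a)" unfolding x by (metis mult.assoc)
    qed
    then show ?thesis unfolding pA_def pBhi_def by (simp add: mult.assoc)
  qed
  have cB: "(F i * E i) * (pBlo * E n) = (pBlo * E n) * (F i * E i)"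
  proof -
    have "(F i * E i) * prod_list (map E (rev [1..<i-1] @ [n])) = prod_list (map E (rev [1..<i-1] @ [n])) * (F i * E i)"
    proof (rule cm_prod)
      fix x assume "x \<in> set (map E (rev [1..<i-1] @ [n]))"
      then obtain j where j0: "j \<in> set (rev [1..<i-1] @ [n])" and x: "x = E j" by (simp only: set_map) blast
      have j: "j \<in> {1..<i-1} \<union> {n}" using j0 by auto
      have jn: "j \<in> {1..n}" and iin: "i \<in> {1..n}" using j assms by auto
      have "E i * E j = E j * E i" using j assms
        by (intro EEc[OF iin jn]) (auto simp: nxt_def prv_def)
      moreover have "F i * E j = E j * F i" using j assms by (intro FEc[OF jn iin]) auto
      ultimately show "F i * E i * x = x * (F i * E i)" unfolding x by (metis mult.assoc)
    qed
    then show ?thesis unfolding pBlo_def by (simp add: mult.assoc)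
  qed
  have key: "F a * (E a * (X * P)) = X * (F i * (E i * P))"
  proof -
    have "F a * (E a * (X * P)) = (F a * E a) * (pA * pBhi) * (E i * (E a * Y))"
      unfolding XY by (simp add: mult.assoc)
    also have "\<dots> = pA * pBhi * (F a * (E a * (E i * (E a * Y))))"
      unfolding cA by (simp add: mult.assoc)
    also have "\<dots> = pA * pBhi * (E i * (E a * (F i * (E i * Y))))" unfolding cor ..
    also have "F i * (E i * Y) = (F i * E i) * (pBlo * E n) * P" unfolding Y_def by (simp add: mult.assoc)
    also have "\<dots> = pBlo * (E n * (F i * (E i * P)))" unfolding cB by (simp add: mult.assoc)
    finally show ?thesis unfolding X_def hB by (simp add: mult.assoc)
  qed
  have PXP: "P * (X * P) = X * P" by (rule Pfx[OF wXP])
  have iin: "i \<in> {1..n}" using assms by auto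
  have PFE: "P * (F i * (E i * P)) = F i * (E i * P)"
  proof (rule Pfx)
    have "wt (\<lambda>k. om k + epsp n k i - epsp n k i) (F i * (E i * P))" by (rule wt_F[OF wt_E[OF wP iin] iin])
    then show "wt om (F i * (E i * P))" by (rule wt_cong) simp
  qed
  have PP: "P * P = P" by (rule Pfx[OF wP])
  have "zeta_s sc n r E F K Ki (i - 1) * zeta_rho sc n r E K Ki = (sc vv * F a * E a - 1) * (P * (X * P))"
    unfolding zeta_s_def zr P_def a_def by (simp add: mult.assoc)
  also have "\<dots> = sc vv * (F a * (E a * (X * P))) - X * P"
    unfolding PXP by (simp add: algebra_simps)
  also have "\<dots> = sc vv * (X * (F i * (E i * P))) - X * P" unfolding key ..
  also have "\<dots> = X * (P * (sc vv * (F i * (E i * P))) - P * P)"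
    unfolding sc_left[of P] PFE PP by (simp add: sc_left algebra_simps)
  also have "\<dots> = zeta_rho sc n r E K Ki * zeta_s sc n r E F K Ki i"
    unfolding zeta_s_def zr P_def by (simp add: algebra_simps)
  finally show ?thesis .
qed
end
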